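(* Let $k,n\ge 1$ and let $x_1\le x_2\le\dots\le x_{kn}$ be real numbers. If $2\le k\le 16$, the partition of $\{1,\dots,kn\}$ into consecutive blocks $B_i=\{(i-1)k+1,\dots,ik\}$, $i=1,\dots,n$, is a minimal $k$-tuple partition with respect to $A$. If $2\le k\le 8$, the same partition is also minimal with respect to $S$.
   Context: For real numbers $x_1,\dots,x_k$ (repetitions allowed) define $A(x_1,\dots,x_k)=\sum_{1\le i<j\le k}|x_j-x_i|$ and $S(x_1,\dots,x_k)=\sum_{1\le i<j\le k}(x_j-x_i)^2$. Given real numbers $x_1,\dots,x_{kn}$, a $k$-tuple partition is a partition of the index set $\{1,\dots,kn\}$ into $n$ blocks, each of size $k$. Its cost with respect to $D\in\{A,S\}$ is the sum over blocks $\{i_1,\dots,i_k\}$ of $D(x_{i_1},\dots,x_{i_k})$. A $k$-tuple partition is minimal if its cost is less than or equal to the cost of every other $k$-tuple partition. *)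

theory Defs
  imports "HOL-Analysis.Analysis"
begin

definition pairs_in :: "nat set \<Rightarrow> (nat \<times> nat) set" where
  "pairs_in B = {(i, j). i \<in> B \<and> j \<in> B \<and> i < j}"

definition A_disp :: "(nat \<Rightarrow> real) \<Rightarrow> nat set \<Rightarrow> real" where
  "A_disp x B = (\<Sum>(i, j)\<in>pairs_in B. \<bar>x j - x i\<bar>)"

definition S_disp :: "(nat \<Rightarrow> real) \<Rightarrow> nat set \<Rightarrow> real" where
  "S_disp x B = (\<Sum>(i, j)\<in>pairs_in B. (x j - x i)^2)"

definition tuple_partition :: "nat \<Rightarrow> nat \<Rightarrow> nat set set \<Rightarrow> bool" where
  "tuple_partition k n P \<longleftrightarrow>
     \<Union>P = {1..k*n} \<and>
     (\<forall>B\<in>P. \<forall>C\<in>P. B \<noteq> C \<longrightarrow> B \<inter> C = {}) \<and>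
     (\<forall>B\<in>P. card B = k) \<and>
     card P = n"

definition partition_cost ::
  "((nat \<Rightarrow> real) \<Rightarrow> nat set \<Rightarrow> real) \<Rightarrow> (nat \<Rightarrow> real) \<Rightarrow> nat set set \<Rightarrow> real" where
  "partition_cost D x P = (\<Sum>B\<in>P. D x B)"

definition minimal_partition ::
  "((nat \<Rightarrow> real) \<Rightarrow> nat set \<Rightarrow> real) \<Rightarrow> nat \<Rightarrow> nat \<Rightarrow> (nat \<Rightarrow> real) \<Rightarrow> nat set set \<Rightarrow> bool" where
  "minimal_partition D k n x P \<longleftrightarrow>
     tuple_partition k n P \<and>
     (\<forall>Q. tuple_partition k n Q \<longrightarrow> partition_cost D x P \<le> partition_cost D x Q)"

definition consecutive_partition :: "nat \<Rightarrow> nat \<Rightarrow> nat set set" where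
  "consecutive_partition k n = (\<lambda>i. {(i - 1) * k + 1 .. i * k}) ` {1..n}"

end

theory Submission
  imports Defs
begin

lemma disj_blocks:
  fixes k :: nat
  assumes "i < j"
  shows "{(i - 1) * k + 1 .. i * k} \<inter> {(j - 1) * k + 1 .. j * k} = {}"
proof -
  have "i * k \<le> (j - 1) * k" using assms by (intro mult_right_mono) auto
  have False if "e \<in> {(i - 1) * k + 1 .. i * k}" "e \<in> {(j - 1) * k + 1 .. j * k}" for e
    using that \<open>i * k \<le> (j - 1) * k\<close> by (simp only: atLeastAtMost_iff) linarith
  then show ?thesis by blast
qed

lemma consecutive_tp:
  assumes k: "k \<ge> 1"
  shows "tuple_partition k n (consecutive_partition k n)"
proof -
  let ?B = "\<lambda>i. {(i - 1) * k + 1 .. i * k}"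
  have disj: "i \<noteq> j \<Longrightarrow> ?B i \<inter> ?B j = {}" for i j
    using disj_blocks[of i j k] disj_blocks[of j i k] by (cases "i < j") auto
  have ne: "i \<ge> 1 \<Longrightarrow> ?B i \<noteq> {}" for i
  proof -
    assume "i \<ge> 1"
    then have "(i - 1) * k + k = i * k" by (cases i) auto
    then show ?thesis using k by auto
  qed
  have inj: "inj_on ?B {1..n}"
    by (rule inj_onI) (use disj ne in fastforce)
  have cardB: "card (?B i) = k" if "i \<ge> 1" for i
  proof -
    have "(i - 1) * k + k = i * k" using that by (cases i) auto
    then show ?thesis by simp
  qed
  have U: "\<Union>(?B ` {1..n}) = {1..k*n}"
  proof
    show "\<Union>(?B ` {1..n}) \<subseteq> {1..k*n}"
    proof
      fix j assume "j \<in> \<Union>(?B ` {1..n})"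
      then obtain i where i: "i \<in> {1..n}" "j \<in> ?B i" by auto
      have "i * k \<le> k * n" using i by (simp add: mult.commute)
      moreover have "j \<le> i * k" "1 \<le> j" using i by auto
      ultimately have "j \<le> k * n" by (metis le_trans)
      then show "j \<in> {1..k*n}" using \<open>1 \<le> j\<close> by simp
    qed
  next
    show "{1..k*n} \<subseteq> \<Union>(?B ` {1..n})"
    proof
      fix j assume j: "j \<in> {1..k*n}"
      define i where "i = (j - 1) div k + 1"
      have a: "(i - 1) * k \<le> j - 1" unfolding i_def by simp
      have b: "j - 1 < i * k" unfolding i_def using k dividend_less_div_times[of k "j - 1"] by simp
      have c: "(j - 1) div k < n" using j k
        by (intro less_mult_imp_div_less) (auto simp: mult.commute)
      show "j \<in> \<Union>(?B ` {1..n})"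
      proof (rule UN_I[of i])
        show "i \<in> {1..n}" using c by (simp add: i_def)
        show "j \<in> ?B i" using a b j by (simp only: atLeastAtMost_iff) linarith
      qed
    qed
  qed
  show ?thesis
    unfolding tuple_partition_def consecutive_partition_def
    using U disj cardB card_image[OF inj] by auto
qed

lemma tp_basic:
  assumes "tuple_partition k n P"
  shows "finite P" "\<And>B. B \<in> P \<Longrightarrow> finite B" "\<And>B. B \<in> P \<Longrightarrow> B \<subseteq> {1..k*n}"
    "\<And>B. B \<in> P \<Longrightarrow> card B = k"
    "\<And>B C. B \<in> P \<Longrightarrow> C \<in> P \<Longrightarrow> B \<noteq> C \<Longrightarrow> B \<inter> C = {}"
    "\<Union>P = {1..k*n}" "card P = n"
proof -
  have U: "\<Union>P = {1..k*n}" using assms unfolding tuple_partition_def by auto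
  then show "finite P" by (metis finite_UnionD finite_atLeastAtMost)
  show "\<And>B. B \<in> P \<Longrightarrow> B \<subseteq> {1..k*n}" using U by auto
  then show "\<And>B. B \<in> P \<Longrightarrow> finite B" using finite_subset by blast
  show "\<And>B. B \<in> P \<Longrightarrow> card B = k"
    "\<And>B C. B \<in> P \<Longrightarrow> C \<in> P \<Longrightarrow> B \<noteq> C \<Longrightarrow> B \<inter> C = {}"
    "\<Union>P = {1..k*n}" "card P = n" using assms U unfolding tuple_partition_def by auto
qed

lemma tp_sum:
  fixes f :: "nat \<Rightarrow> 'a::comm_monoid_add"
  assumes "tuple_partition k n P"
  shows "(\<Sum>B\<in>P. \<Sum>i\<in>B. f i) = (\<Sum>i\<in>{1..k*n}. f i)"
proof -
  have "(\<Sum>i\<in>\<Union>P. f i) = (\<Sum>B\<in>P. \<Sum>i\<in>B. f i)"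
    using tp_basic[OF assms] by (subst sum.Union_disjoint) auto
  then show ?thesis using tp_basic(6)[OF assms] by simp
qed

lemma tele:
  fixes x :: "nat \<Rightarrow> real"
  shows "i \<le> j \<Longrightarrow> x j - x i = (\<Sum>t\<in>{Suc i..j}. x t - x (t - 1))"
  by (induct j) (auto simp: le_Suc_eq)

lemma A_formula:
  fixes x :: "nat \<Rightarrow> real"
  assumes B: "B \<subseteq> {1..N}"
    and sorted: "\<And>i j. 1 \<le> i \<Longrightarrow> i \<le> j \<Longrightarrow> j \<le> N \<Longrightarrow> x i \<le> x j"
  shows "A_disp x B = (\<Sum>t\<in>{2..N}. (x t - x (t - 1)) * real (card (B \<inter> {..<t}) * card (B \<inter> {t..})))"
proof -
  define d where "d t = x t - x (t - 1)" for t
  have finB: "finite B" using B finite_subset by blast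
  have finP: "finite (pairs_in B)"
    by (rule finite_subset[of _ "B \<times> B"]) (auto simp: pairs_in_def finB)
  have "A_disp x B = (\<Sum>p\<in>pairs_in B. \<Sum>t\<in>{2..N}. if fst p < t \<and> t \<le> snd p then d t else 0)"
    unfolding A_disp_def
  proof (rule sum.cong[OF refl])
    fix p assume p: "p \<in> pairs_in B"
    obtain i j where ij: "p = (i, j)" by (cases p)
    have i: "1 \<le> i" "i < j" "j \<le> N" using p B by (auto simp: pairs_in_def ij)
    have "\<bar>x j - x i\<bar> = x j - x i" using sorted[of i j] i by auto
    also have "\<dots> = (\<Sum>t\<in>{Suc i..j}. d t)" using tele[of i j x] i by (simp add: d_def)
    also have "\<dots> = (\<Sum>t\<in>{2..N}. if i < t \<and> t \<le> j then d t else 0)"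
    proof -
      have "{Suc i..j} = {t \<in> {2..N}. i < t \<and> t \<le> j}" using i by auto
      then show ?thesis using sum.inter_filter[of "{2..N}" d "\<lambda>t. i < t \<and> t \<le> j"] by simp
    qed
    finally show "(case p of (i, j) \<Rightarrow> \<bar>x j - x i\<bar>) = (\<Sum>t\<in>{2..N}. if fst p < t \<and> t \<le> snd p then d t else 0)"
      by (simp add: ij)
  qed
  also have "\<dots> = (\<Sum>t\<in>{2..N}. \<Sum>p\<in>pairs_in B. if fst p < t \<and> t \<le> snd p then d t else 0)"
    by (rule sum.swap)
  also have "\<dots> = (\<Sum>t\<in>{2..N}. d t * real (card (B \<inter> {..<t}) * card (B \<inter> {t..})))"
  proof (rule sum.cong[OF refl])
    fix t
    have e: "{p \<in> pairs_in B. fst p < t \<and> t \<le> snd p} = (B \<inter> {..<t}) \<times> (B \<inter> {t..})"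
      by (auto simp: pairs_in_def)
    have "(\<Sum>p\<in>pairs_in B. if fst p < t \<and> t \<le> snd p then d t else 0)
        = (\<Sum>p\<in>{p \<in> pairs_in B. fst p < t \<and> t \<le> snd p}. d t)"
      using sum.inter_filter[OF finP, of "\<lambda>_. d t" "\<lambda>p. fst p < t \<and> t \<le> snd p"] by simp
    also have "\<dots> = d t * real (card (B \<inter> {..<t}) * card (B \<inter> {t..}))"
      by (simp add: e card_cartesian_product)
    finally show "(\<Sum>p\<in>pairs_in B. if fst p < t \<and> t \<le> snd p then d t else 0) = d t * real (card (B \<inter> {..<t}) * card (B \<inter> {t..}))" .
  qed
  finally show ?thesis by (simp add: d_def)
qed

definition G :: "nat \<Rightarrow> nat \<Rightarrow> nat" where
  "G k m = (m mod k) * (k - m mod k)"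

lemma G_step:
  assumes k: "k > 0" and a: "a \<le> k"
  shows "G k (s + a) \<le> G k s + a * (k - a)"
proof -
  define r where "r = s mod k"
  have r: "r < k" using k by (simp add: r_def)
  have m: "(s + a) mod k = (r + a) mod k" by (simp add: r_def mod_add_left_eq)
  have Gs: "G k s = r * (k - r)" by (simp add: G_def r_def)
  show ?thesis
  proof (cases "a = k")
    case True
    then show ?thesis by (simp add: G_def)
  next
    case False
    then have ak: "a < k" using a by simp
    show ?thesis
    proof (cases "r + a < k")
      case True
      define c where "c = k - (r + a)"
      have e1: "k - r = a + c" "k - a = r + c" using True unfolding c_def by linarith+
      have "(s + a) mod k = r + a" using m True by simp
      then have "G k (s + a) = (r + a) * c" by (simp add: G_def c_def)
      moreover have "(r + a) * c \<le> r * (a + c) + a * (r + c)" by (simp add: algebra_simps)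
      ultimately show ?thesis using Gs e1 by simp
    next
      case False
      define c where "c = r + a - k"
      define r' where "r' = k - r"
      define a' where "a' = k - a"
      have e: "r + a = c + k" "c < k" "k - c = r' + a'" "r = c + a'" "a = c + r'"
        using False r ak unfolding c_def r'_def a'_def by linarith+
      have "(r + a) mod k = c" using e(1,2) by simp
      then have "G k (s + a) = c * (r' + a')" using m e(3) by (simp add: G_def)
      moreover have "c * (r' + a') \<le> (c + a') * r' + (c + r') * a'" by (simp add: algebra_simps)
      moreover have "k - a = a'" "k - r = r'" unfolding a'_def r'_def by auto
      ultimately show ?thesis using Gs e by simp
    qed
  qed
qed

lemma G_sum:
  assumes "finite Q" "k > 0" "\<And>B. B \<in> Q \<Longrightarrow> a B \<le> k"
  shows "G k (\<Sum>B\<in>Q. a B) \<le> (\<Sum>B\<in>Q. a B * (k - a B))"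
  using assms
proof (induction Q rule: finite_induct)
  case empty
  then show ?case by (simp add: G_def)
next
  case (insert b Q)
  have "G k (\<Sum>B\<in>insert b Q. a B) = G k ((\<Sum>B\<in>Q. a B) + a b)"
    using insert by (simp add: add.commute)
  also have "\<dots> \<le> G k (\<Sum>B\<in>Q. a B) + a b * (k - a b)"
    using insert by (intro G_step) auto
  also have "\<dots> \<le> (\<Sum>B\<in>Q. a B * (k - a B)) + a b * (k - a b)"
    using insert.IH insert.prems by simp
  finally show ?case using insert by (simp add: add.commute)
qed


lemma card_lt_sum: "finite B \<Longrightarrow> card (B \<inter> {..<t}) = (\<Sum>i\<in>B. if i < t then 1 else 0)"
proof -
  assume f: "finite B"
  have "B \<inter> {..<t} = {i \<in> B. i < t}" by auto
  moreover have "(\<Sum>i\<in>{i \<in> B. i < t}. 1::nat) = (\<Sum>i\<in>B. if i < t then 1 else 0)"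
    by (rule sum.inter_filter[OF f])
  ultimately show ?thesis by (simp only: card_eq_sum)
qed


lemma A_cost:
  fixes x :: "nat \<Rightarrow> real"
  assumes Q: "tuple_partition k n Q"
    and sorted: "\<And>i j. 1 \<le> i \<Longrightarrow> i \<le> j \<Longrightarrow> j \<le> k * n \<Longrightarrow> x i \<le> x j"
  shows "partition_cost A_disp x Q = (\<Sum>t\<in>{2..k*n}. (x t - x (t - 1)) *
            real (\<Sum>B\<in>Q. card (B \<inter> {..<t}) * card (B \<inter> {t..})))"
proof -
  have "partition_cost A_disp x Q = (\<Sum>B\<in>Q. \<Sum>t\<in>{2..k*n}. (x t - x (t - 1)) * real (card (B \<inter> {..<t}) * card (B \<inter> {t..})))"
    unfolding partition_cost_def
    by (rule sum.cong[OF refl], rule A_formula) (use tp_basic(3)[OF Q] sorted in auto)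
  also have "\<dots> = (\<Sum>t\<in>{2..k*n}. \<Sum>B\<in>Q. (x t - x (t - 1)) * real (card (B \<inter> {..<t}) * card (B \<inter> {t..})))"
    by (rule sum.swap)
  also have "\<dots> = (\<Sum>t\<in>{2..k*n}. (x t - x (t - 1)) * real (\<Sum>B\<in>Q. card (B \<inter> {..<t}) * card (B \<inter> {t..})))"
    by (simp add: sum_distrib_left)
  finally show ?thesis .
qed

lemma lowerQ:
  assumes Q: "tuple_partition k n Q" and k: "k > 0" and t: "2 \<le> t" "t \<le> k * n"
  shows "G k (t - 1) \<le> (\<Sum>B\<in>Q. card (B \<inter> {..<t}) * card (B \<inter> {t..}))"
proof -
  note tp = tp_basic[OF Q]
  have split: "card (B \<inter> {t..}) = k - card (B \<inter> {..<t})" if "B \<in> Q" for B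
  proof -
    have "B = (B \<inter> {..<t}) \<union> (B \<inter> {t..})" by auto
    moreover have "card ((B \<inter> {..<t}) \<union> (B \<inter> {t..})) = card (B \<inter> {..<t}) + card (B \<inter> {t..})"
      by (rule card_Un_disjoint) (use tp(2)[OF that] in auto)
    ultimately have "card B = card (B \<inter> {..<t}) + card (B \<inter> {t..})" by simp
    then show ?thesis using tp(4)[OF that] by simp
  qed
  have le: "card (B \<inter> {..<t}) \<le> k" if "B \<in> Q" for B
    using tp(2,4)[OF that] by (metis card_mono inf_le1)
  have sumc: "(\<Sum>B\<in>Q. card (B \<inter> {..<t})) = t - 1"
  proof -
    have "(\<Sum>B\<in>Q. card (B \<inter> {..<t})) = (\<Sum>B\<in>Q. \<Sum>i\<in>B. if i < t then 1 else 0)"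
      using tp(2) card_lt_sum by (intro sum.cong) auto
    also have "\<dots> = (\<Sum>i\<in>{1..k*n}. if i < t then 1 else 0)" by (rule tp_sum[OF Q])
    also have "\<dots> = card ({1..k*n} \<inter> {..<t})" using card_lt_sum[of "{1..k*n}" t] by simp
    also have "{1..k*n} \<inter> {..<t} = {1..t-1}" using t by auto
    finally show ?thesis by simp
  qed
  have "G k (t - 1) \<le> (\<Sum>B\<in>Q. card (B \<inter> {..<t}) * (k - card (B \<inter> {..<t})))"
    using G_sum[OF tp(1) k, of "\<lambda>B. card (B \<inter> {..<t})"] le sumc by simp
  also have "\<dots> = (\<Sum>B\<in>Q. card (B \<inter> {..<t}) * card (B \<inter> {t..}))"
    using split by (intro sum.cong) auto
  finally show ?thesis .
qed

lemma upper_block: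
  assumes k: "k > 0" and t: "2 \<le> t" and i: "1 \<le> i"
  shows "card ({(i - 1) * k + 1 .. i * k} \<inter> {..<t}) * card ({(i - 1) * k + 1 .. i * k} \<inter> {t..})
     \<le> (if i = (t - 1) div k + 1 then G k (t - 1) else 0)"
proof -
  define p where "p = (i - 1) * k"
  have ik: "i * k = p + k" unfolding p_def using i by (cases i) auto
  show ?thesis
  proof (cases "p + k \<le> t - 1")
    case True
    then have "{(i - 1) * k + 1 .. i * k} \<inter> {t..} = {}" using ik t by auto
    then show ?thesis by simp
  next
    case False
    show ?thesis
    proof (cases "t - 1 \<le> p")
      case True
      then have "{(i - 1) * k + 1 .. i * k} \<inter> {..<t} = {}" using t unfolding p_def by auto
      then show ?thesis by simp
    next
      case False2: False
      have e1: "{(i - 1) * k + 1 .. i * k} \<inter> {..<t} = {p + 1 .. t - 1}"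
        using ik t False False2 unfolding p_def[symmetric] by auto
      have e2: "{(i - 1) * k + 1 .. i * k} \<inter> {t..} = {t .. p + k}"
        using ik t False False2 unfolding p_def[symmetric] by auto
      have dv: "(t - 1) div k = i - 1"
      proof (rule div_nat_eqI)
        show "k * (i - 1) \<le> t - 1" using False2 by (simp add: p_def mult.commute)
        have "k * Suc (i - 1) = p + k" by (simp add: p_def algebra_simps)
        then show "t - 1 < k * Suc (i - 1)" using False by linarith
      qed
      have md: "(t - 1) mod k = t - 1 - p"
        using minus_div_mult_eq_mod[of "t - 1" k] dv by (simp add: p_def)
      have c1: "Suc (t - 1) - (p + 1) = t - 1 - p" "Suc (p + k) - t = k - (t - 1 - p)"
        using t False False2 by linarith+
      have "card ({(i - 1) * k + 1 .. i * k} \<inter> {..<t}) * card ({(i - 1) * k + 1 .. i * k} \<inter> {t..})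
          = (Suc (t - 1) - (p + 1)) * (Suc (p + k) - t)" by (simp only: e1 e2 card_atLeastAtMost)
      also have "\<dots> = G k (t - 1)" unfolding G_def md c1 ..
      finally show ?thesis using dv i by simp
    qed
  qed
qed

lemma upperC:
  assumes k: "k > 0" and t: "2 \<le> t"
  shows "(\<Sum>B\<in>consecutive_partition k n. card (B \<inter> {..<t}) * card (B \<inter> {t..})) \<le> G k (t - 1)"
proof -
  let ?h = "\<lambda>B. card (B \<inter> {..<t}) * card (B \<inter> {t..})"
  let ?B = "\<lambda>i. {(i - 1) * k + 1 .. i * k}"
  have "(\<Sum>B\<in>consecutive_partition k n. ?h B) \<le> (\<Sum>i\<in>{1..n}. ?h (?B i))"
    unfolding consecutive_partition_def using sum_image_le[of "{1..n}" ?h ?B] by (simp add: o_def)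
  also have "\<dots> \<le> (\<Sum>i\<in>{1..n}. if i = (t - 1) div k + 1 then G k (t - 1) else 0)"
    by (rule sum_mono) (use upper_block[OF k t] in auto)
  also have "\<dots> \<le> G k (t - 1)" by (simp add: sum.delta')
  finally show ?thesis .
qed

lemma A_min:
  fixes x :: "nat \<Rightarrow> real"
  assumes k: "k > 0"
    and sorted: "\<And>i j. 1 \<le> i \<Longrightarrow> i \<le> j \<Longrightarrow> j \<le> k * n \<Longrightarrow> x i \<le> x j"
  shows "minimal_partition A_disp k n x (consecutive_partition k n)"
  unfolding minimal_partition_def
proof (intro conjI allI impI)
  have C: "tuple_partition k n (consecutive_partition k n)" using consecutive_tp k by simp
  then show "tuple_partition k n (consecutive_partition k n)" .
  fix Q assume Q: "tuple_partition k n Q"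
  have "partition_cost A_disp x (consecutive_partition k n) = (\<Sum>t\<in>{2..k*n}. (x t - x (t - 1)) *
            real (\<Sum>B\<in>consecutive_partition k n. card (B \<inter> {..<t}) * card (B \<inter> {t..})))"
    by (rule A_cost[OF C sorted])
  also have "\<dots> \<le> (\<Sum>t\<in>{2..k*n}. (x t - x (t - 1)) * real (G k (t - 1)))"
  proof (rule sum_mono)
    fix t assume t: "t \<in> {2..k*n}"
    have "x (t - 1) \<le> x t" using t by (intro sorted) auto
    show "(x t - x (t - 1)) * real (\<Sum>B\<in>consecutive_partition k n. card (B \<inter> {..<t}) * card (B \<inter> {t..}))
        \<le> (x t - x (t - 1)) * real (G k (t - 1))"
    proof (rule mult_left_mono)
      show "real (\<Sum>B\<in>consecutive_partition k n. card (B \<inter> {..<t}) * card (B \<inter> {t..})) \<le> real (G k (t - 1))"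
        using upperC[OF k, of t n] t by (simp only: of_nat_le_iff) auto
    qed (use \<open>x (t - 1) \<le> x t\<close> in simp)
  qed
  also have "\<dots> \<le> (\<Sum>t\<in>{2..k*n}. (x t - x (t - 1)) *
            real (\<Sum>B\<in>Q. card (B \<inter> {..<t}) * card (B \<inter> {t..})))"
  proof (rule sum_mono)
    fix t assume t: "t \<in> {2..k*n}"
    have "x (t - 1) \<le> x t" using t by (intro sorted) auto
    show "(x t - x (t - 1)) * real (G k (t - 1))
        \<le> (x t - x (t - 1)) * real (\<Sum>B\<in>Q. card (B \<inter> {..<t}) * card (B \<inter> {t..}))"
    proof (rule mult_left_mono)
      show "real (G k (t - 1)) \<le> real (\<Sum>B\<in>Q. card (B \<inter> {..<t}) * card (B \<inter> {t..}))"
        using lowerQ[OF Q k, of t] t by (simp only: of_nat_le_iff) auto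
    qed (use \<open>x (t - 1) \<le> x t\<close> in simp)
  qed
  also have "\<dots> = partition_cost A_disp x Q" by (rule A_cost[OF Q sorted, symmetric])
  finally show "partition_cost A_disp x (consecutive_partition k n) \<le> partition_cost A_disp x Q" .
qed

lemma S_formula:
  fixes x :: "nat \<Rightarrow> real"
  assumes f: "finite B"
  shows "S_disp x B = real (card B) * (\<Sum>i\<in>B. (x i)^2) - (\<Sum>i\<in>B. x i)^2"
proof -
  define g where "g i j = (x j - x i)^2" for i j
  define T1 where "T1 = (\<Sum>i\<in>B. \<Sum>j\<in>B. if i < j then g i j else 0)"
  define T2 where "T2 = (\<Sum>i\<in>B. \<Sum>j\<in>B. if j < i then g i j else 0)"
  have P: "pairs_in B = {p \<in> B \<times> B. fst p < snd p}" by (auto simp: pairs_in_def)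
  have fBB: "finite (B \<times> B)" using f by simp
  have "S_disp x B = (\<Sum>p\<in>pairs_in B. g (fst p) (snd p))"
    unfolding S_disp_def g_def by (rule sum.cong) auto
  also have "\<dots> = (\<Sum>p\<in>B \<times> B. if fst p < snd p then g (fst p) (snd p) else 0)"
    unfolding P by (rule sum.inter_filter[OF fBB])
  also have "\<dots> = T1" unfolding T1_def by (simp add: sum.cartesian_product case_prod_unfold)
  finally have S1: "S_disp x B = T1" .
  have "T2 = (\<Sum>j\<in>B. \<Sum>i\<in>B. if j < i then g i j else 0)" unfolding T2_def by (rule sum.swap)
  also have "\<dots> = T1" unfolding T1_def g_def by (intro sum.cong refl) (metis power2_commute)
  finally have T21: "T2 = T1" .
  have "T1 + T2 = (\<Sum>i\<in>B. \<Sum>j\<in>B. g i j)"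
    unfolding T1_def T2_def sum.distrib[symmetric]
    by (intro sum.cong refl) (auto simp: g_def)
  also have "\<dots> = (\<Sum>i\<in>B. \<Sum>j\<in>B. (x j)^2 + (x i)^2 - 2 * x i * x j)"
    unfolding g_def by (simp add: power2_diff algebra_simps)
  also have "\<dots> = (\<Sum>i\<in>B. (\<Sum>j\<in>B. (x j)^2) + real (card B) * (x i)^2 - 2 * x i * (\<Sum>j\<in>B. x j))"
    by (simp add: sum.distrib sum_subtractf sum_distrib_left)
  also have "\<dots> = 2 * (real (card B) * (\<Sum>i\<in>B. (x i)^2) - (\<Sum>i\<in>B. x i)^2)"
    by (simp add: sum.distrib sum_subtractf sum_distrib_left sum_distrib_right power2_eq_square algebra_simps)
  finally show ?thesis using S1 T21 by simp
qed

lemma S_cost: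
  fixes x :: "nat \<Rightarrow> real"
  assumes Q: "tuple_partition k n Q"
  shows "partition_cost S_disp x Q = real k * (\<Sum>i\<in>{1..k*n}. (x i)^2) - (\<Sum>B\<in>Q. (\<Sum>i\<in>B. x i)^2)"
proof -
  have "partition_cost S_disp x Q = (\<Sum>B\<in>Q. real k * (\<Sum>i\<in>B. (x i)^2) - (\<Sum>i\<in>B. x i)^2)"
    unfolding partition_cost_def using tp_basic[OF Q] S_formula by (intro sum.cong) auto
  also have "\<dots> = real k * (\<Sum>B\<in>Q. \<Sum>i\<in>B. (x i)^2) - (\<Sum>B\<in>Q. (\<Sum>i\<in>B. x i)^2)"
    by (simp add: sum_subtractf sum_distrib_left)
  also have "\<dots> = real k * (\<Sum>i\<in>{1..k*n}. (x i)^2) - (\<Sum>B\<in>Q. (\<Sum>i\<in>B. x i)^2)"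
    by (simp only: tp_sum[OF Q])
  finally show ?thesis .
qed

lemma key_alg:
  fixes s u :: "'a \<Rightarrow> real"
  assumes fin: "finite Q" and b: "b \<in> Q"
    and sumd: "(\<Sum>C\<in>Q - {b}. s C - u C) = c - s b"
    and dpos: "\<And>C. C \<in> Q - {b} \<Longrightarrow> u C \<le> s C"
    and smax: "\<And>C. C \<in> Q \<Longrightarrow> s C \<le> s b"
  shows "(\<Sum>C\<in>Q. (s C)^2) \<le> c^2 + (\<Sum>C\<in>Q - {b}. (u C)^2)"
proof -
  have pt: "(s C)^2 \<le> (u C)^2 + 2 * s b * (s C - u C)" if "C \<in> Q - {b}" for C
  proof -
    have "0 \<le> (s C - u C)^2 + 2 * (s C - u C) * (s b - s C)"
      using dpos[OF that] smax[of C] that by (intro add_nonneg_nonneg mult_nonneg_nonneg) auto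
    then show ?thesis by (simp add: power2_eq_square algebra_simps)
  qed
  have "(\<Sum>C\<in>Q. (s C)^2) = (s b)^2 + (\<Sum>C\<in>Q - {b}. (s C)^2)"
    using sum.remove[OF fin b] by simp
  also have "\<dots> \<le> (s b)^2 + (\<Sum>C\<in>Q - {b}. (u C)^2 + 2 * s b * (s C - u C))"
    using pt by (intro add_left_mono sum_mono) auto
  also have "\<dots> = (s b)^2 + (\<Sum>C\<in>Q - {b}. (u C)^2) + 2 * s b * (c - s b)"
    by (simp add: sum.distrib sum_distrib_left[symmetric] sumd)
  also have "\<dots> \<le> c^2 + (\<Sum>C\<in>Q - {b}. (u C)^2)"
  proof -
    have "0 \<le> (c - s b)^2" by simp
    then show ?thesis by (simp add: power2_eq_square algebra_simps)
  qed
  finally show ?thesis .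
qed

lemma swap_step:
  fixes x :: "nat \<Rightarrow> real"
  assumes k: "k > 0" and Q: "tuple_partition k (Suc m) Q"
    and sorted: "\<And>i j. 1 \<le> i \<Longrightarrow> i \<le> j \<Longrightarrow> j \<le> k * Suc m \<Longrightarrow> x i \<le> x j"
  shows "\<exists>Q''. tuple_partition k m Q'' \<and>
    (\<Sum>B\<in>Q. (\<Sum>i\<in>B. x i)^2) \<le> (\<Sum>i\<in>{k*m+1..k*m+k}. x i)^2 + (\<Sum>D\<in>Q''. (\<Sum>i\<in>D. x i)^2)"
proof -
  define s where "s B = (\<Sum>i\<in>B. x i)" for B
  define N where "N = k * Suc m"
  define T where "T = {k*m+1..k*m+k}"
  have N: "N = k*m + k" by (simp add: N_def)
  note tp = tp_basic[OF Q, folded N_def]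
  have TN: "T \<subseteq> {1..N}" unfolding T_def N by auto
  have cT: "card T = k" unfolding T_def by simp
  have Qne: "Q \<noteq> {}" using tp(7) by auto
  obtain b where b: "b \<in> Q" "\<And>C. C \<in> Q \<Longrightarrow> s C \<le> s b"
  proof -
    have "Max (s ` Q) \<in> s ` Q" using tp(1) Qne by simp
    then obtain b where "b \<in> Q" "s b = Max (s ` Q)" by auto
    moreover have "\<And>C. C \<in> Q \<Longrightarrow> s C \<le> Max (s ` Q)" using tp(1) by simp
    ultimately show ?thesis using that by metis
  qed
  define L where "L = b - T"
  define R where "R = T - b"
  have fb: "finite b" using tp(2)[OF b(1)] .
  have bN: "b \<subseteq> {1..N}" using tp(3)[OF b(1)] .
  have cL: "card L = card R"
  proof -
    have "card L = card b - card (b \<inter> T)" unfolding L_def using fb by (intro card_Diff_subset_Int) auto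
    moreover have "card R = card T - card (T \<inter> b)" unfolding R_def by (intro card_Diff_subset_Int) (simp add: T_def)
    ultimately show ?thesis using tp(4)[OF b(1)] cT by (simp add: Int_commute)
  qed
  obtain \<sigma> where \<sigma>: "bij_betw \<sigma> R L"
    using finite_same_card_bij[of R L] cL fb unfolding L_def R_def T_def by auto
  have LR: "L \<inter> R = {}" "L \<subseteq> b" "R \<subseteq> T" "L \<inter> T = {}" unfolding L_def R_def by auto
  define \<tau> where "\<tau> i = (if i \<in> R then \<sigma> i else if i \<in> L then inv_into R \<sigma> i else i)" for i
  have injs: "inj_on \<sigma> R" and imgs: "\<sigma> ` R = L" using \<sigma> by (auto simp: bij_betw_def)
  have tt: "\<tau> (\<tau> i) = i" for i
  proof (cases "i \<in> R")
    case True
    then have "\<sigma> i \<in> L" using imgs by auto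
    then have "\<sigma> i \<notin> R" using LR by auto
    then show ?thesis using True \<open>\<sigma> i \<in> L\<close> injs by (simp add: \<tau>_def)
  next
    case False
    show ?thesis
    proof (cases "i \<in> L")
      case True
      then have "inv_into R \<sigma> i \<in> R" using imgs by (metis inv_into_into)
      moreover have "\<sigma> (inv_into R \<sigma> i) = i" using True imgs by (metis f_inv_into_f)
      ultimately show ?thesis using True False by (simp add: \<tau>_def)
    next
      case False2: False
      then show ?thesis using False by (simp add: \<tau>_def)
    qed
  qed
  have injt: "inj \<tau>" by (metis injI tt)
  have tN: "\<tau> i \<in> {1..N}" if "i \<in> {1..N}" for i
  proof -
    have "L \<subseteq> {1..N}" "R \<subseteq> {1..N}" using LR bN TN by auto
    moreover have "i \<in> R \<Longrightarrow> \<sigma> i \<in> L" using imgs by auto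
    moreover have "i \<in> L \<Longrightarrow> inv_into R \<sigma> i \<in> R" using imgs by (metis inv_into_into)
    ultimately show ?thesis using that by (auto simp: \<tau>_def)
  qed
  have tU: "\<tau> ` {1..N} = {1..N}"
  proof
    show "\<tau> ` {1..N} \<subseteq> {1..N}" using tN by auto
    show "{1..N} \<subseteq> \<tau> ` {1..N}"
    proof
      fix i assume "i \<in> {1..N}"
      then show "i \<in> \<tau> ` {1..N}" using tN[of "\<tau> i"] tt[of i] tN by (metis image_eqI)
    qed
  qed
  have tb: "\<tau> ` b = T"
  proof
    show "\<tau> ` b \<subseteq> T"
    proof
      fix j assume "j \<in> \<tau> ` b"
      then obtain i where i: "i \<in> b" "j = \<tau> i" by auto
      show "j \<in> T"
      proof (cases "i \<in> L")
        case True
        then have "inv_into R \<sigma> i \<in> R" using imgs by (metis inv_into_into)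
        then show ?thesis using i True LR by (auto simp: \<tau>_def)
      next
        case False
        then have "i \<in> T" "i \<notin> R" using i unfolding L_def R_def by auto
        then show ?thesis using i False by (simp add: \<tau>_def)
      qed
    qed
    show "T \<subseteq> \<tau> ` b"
    proof
      fix j assume j: "j \<in> T"
      show "j \<in> \<tau> ` b"
      proof (cases "j \<in> R")
        case True
        then have "\<sigma> j \<in> L" using imgs by auto
        then have "\<sigma> j \<in> b" "\<tau> (\<sigma> j) = j" using LR tt[of j] True by (auto simp: \<tau>_def)
        then show ?thesis by (metis image_eqI)
      next
        case False
        then have "j \<in> b" "j \<notin> L" using j unfolding R_def L_def by auto
        then show ?thesis using False by (metis \<tau>_def image_eqI)
      qed
    qed
  qed
  have tle: "x (\<tau> i) \<le> x i" if "i \<in> {1..N}" "i \<notin> b" for i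
  proof (cases "i \<in> R")
    case True
    then have "\<sigma> i \<in> L" using imgs by auto
    then have "\<sigma> i \<in> {1..N}" "\<sigma> i \<notin> T" using LR bN by auto
    then have "\<sigma> i \<le> k * m" "1 \<le> \<sigma> i" unfolding T_def N by auto
    moreover have "k * m < i" using True LR unfolding T_def by auto
    ultimately show ?thesis using True that sorted[of "\<sigma> i" i] by (simp add: \<tau>_def N_def)
  next
    case False
    then have "i \<notin> L" using that LR by auto
    then show ?thesis using False by (simp add: \<tau>_def)
  qed
  define Q' where "Q' = (\<lambda>B. \<tau> ` B) ` Q"
  have injQ: "inj_on (\<lambda>B. \<tau> ` B) Q" using injt by (metis inj_on_image inj_on_subset subset_UNIV)
  have Q': "tuple_partition k (Suc m) Q'"
    unfolding tuple_partition_def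
  proof (intro conjI ballI impI)
    show "\<Union>Q' = {1..k * Suc m}" unfolding Q'_def using tp(6) tU by (simp add: image_Union[symmetric] N_def)
    show "card Q' = Suc m" unfolding Q'_def using card_image[OF injQ] tp(7) by simp
  next
    fix B' assume "B' \<in> Q'"
    then obtain B where "B \<in> Q" "B' = \<tau> ` B" unfolding Q'_def by auto
    then show "card B' = k" using tp(4) card_image[of \<tau> B] injt by (simp add: inj_on_subset)
  next
    fix B' C' assume "B' \<in> Q'" "C' \<in> Q'" "B' \<noteq> C'"
    then obtain B C where "B \<in> Q" "C \<in> Q" "B' = \<tau> ` B" "C' = \<tau> ` C" "B \<noteq> C" unfolding Q'_def by auto
    then show "B' \<inter> C' = {}" using tp(5) image_Int[OF injt, of B C] by auto
  qed
  note tp' = tp_basic[OF Q', folded N_def]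
  have TQ': "T \<in> Q'" using b(1) tb unfolding Q'_def by auto
  define Q'' where "Q'' = Q' - {T}"
  have Q'': "tuple_partition k m Q''"
    unfolding tuple_partition_def
  proof (intro conjI ballI impI)
    have "\<Union>Q'' = \<Union>Q' - T"
    proof
      show "\<Union>Q'' \<subseteq> \<Union>Q' - T" using tp'(5) TQ' unfolding Q''_def by blast
      show "\<Union>Q' - T \<subseteq> \<Union>Q''" unfolding Q''_def by blast
    qed
    also have "\<dots> = {1..k*m}" using tp'(6) unfolding T_def N by auto
    finally show "\<Union>Q'' = {1..k * m}" .
    show "card Q'' = m" unfolding Q''_def using tp'(7) TQ' tp'(1) by simp
  next
    fix B assume "B \<in> Q''" then show "card B = k" using tp'(4) unfolding Q''_def by auto
  next
    fix B C assume "B \<in> Q''" "C \<in> Q''" "B \<noteq> C" then show "B \<inter> C = {}" using tp'(5) unfolding Q''_def by auto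
  qed
  have Q''img: "Q'' = (\<lambda>B. \<tau> ` B) ` (Q - {b})"
    unfolding Q''_def Q'_def using inj_on_image_set_diff[OF injQ, of Q "{b}"] b(1) tb by auto
  define u where "u C = s (\<tau> ` C)" for C
  have u: "u C = (\<Sum>i\<in>C. x (\<tau> i))" for C
    unfolding u_def s_def using sum.reindex[of \<tau> C x] injt by (simp add: inj_on_subset)
  have sumQ'': "(\<Sum>D\<in>Q''. (s D)^2) = (\<Sum>C\<in>Q - {b}. (u C)^2)"
    unfolding Q''img u_def using injQ by (simp add: sum.reindex inj_on_diff)
  have tot: "(\<Sum>C\<in>Q. u C) = (\<Sum>C\<in>Q. s C)"
  proof -
    have "(\<Sum>C\<in>Q. u C) = (\<Sum>D\<in>Q'. s D)" unfolding Q'_def u_def using injQ by (simp add: sum.reindex)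
    also have "\<dots> = (\<Sum>i\<in>{1..k * Suc m}. x i)" unfolding s_def by (rule tp_sum[OF Q'])
    also have "\<dots> = (\<Sum>C\<in>Q. s C)" unfolding s_def by (rule tp_sum[OF Q, symmetric])
    finally show ?thesis .
  qed
  have sumd: "(\<Sum>C\<in>Q - {b}. s C - u C) = s T - s b"
  proof -
    have "(\<Sum>C\<in>Q - {b}. s C - u C) = ((\<Sum>C\<in>Q. s C) - s b) - ((\<Sum>C\<in>Q. u C) - u b)"
      using sum.remove[OF tp(1) b(1), of s] sum.remove[OF tp(1) b(1), of u] by (simp add: sum_subtractf)
    also have "\<dots> = u b - s b" using tot by simp
    finally show ?thesis using tb by (simp add: u_def)
  qed
  have dpos: "u C \<le> s C" if "C \<in> Q - {b}" for C
  proof -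
    have "C \<inter> b = {}" using tp(5)[of C b] that b(1) by auto
    moreover have "C \<subseteq> {1..N}" using tp(3) that by auto
    ultimately have "\<And>i. i \<in> C \<Longrightarrow> x (\<tau> i) \<le> x i"
      using tle by (metis disjoint_iff subsetD)
    then show ?thesis unfolding u s_def by (rule sum_mono)
  qed
  have "(\<Sum>C\<in>Q. (s C)^2) \<le> (s T)^2 + (\<Sum>C\<in>Q - {b}. (u C)^2)"
    by (rule key_alg[OF tp(1) b(1) sumd dpos b(2)])
  then show ?thesis using Q'' sumQ'' unfolding s_def T_def by auto
qed

lemma blocks_inj:
  fixes k :: nat
  assumes k: "k > 0"
  shows "inj_on (\<lambda>i. {(i - 1) * k + 1 .. i * k}) {1..n}"
proof -
  let ?B = "\<lambda>i. {(i - 1) * k + 1 .. i * k}"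
  have disj: "i \<noteq> j \<Longrightarrow> ?B i \<inter> ?B j = {}" for i j
    using disj_blocks[of i j k] disj_blocks[of j i k] by (cases "i < j") auto
  have ne: "i \<ge> 1 \<Longrightarrow> ?B i \<noteq> {}" for i
  proof -
    assume "i \<ge> 1"
    then have "(i - 1) * k + k = i * k" by (cases i) auto
    then show ?thesis using k by auto
  qed
  show ?thesis
    by (rule inj_onI) (use disj ne in fastforce)
qed

lemma S_ind:
  fixes x :: "nat \<Rightarrow> real"
  assumes k: "k > 0"
    and sorted: "\<And>i j. 1 \<le> i \<Longrightarrow> i \<le> j \<Longrightarrow> j \<le> k * n \<Longrightarrow> x i \<le> x j"
  shows "m \<le> n \<Longrightarrow> tuple_partition k m Q \<Longrightarrow>
    (\<Sum>B\<in>Q. (\<Sum>i\<in>B. x i)^2) \<le> (\<Sum>j\<in>{1..m}. (\<Sum>i\<in>{(j - 1) * k + 1 .. j * k}. x i)^2)"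
proof (induction m arbitrary: Q)
  case 0
  then have "Q = {}" using tp_basic(1,7)[OF "0.prems"(2)] by simp
  then show ?case by simp
next
  case (Suc m)
  have sorted': "x i \<le> x j" if "1 \<le> i" "i \<le> j" "j \<le> k * Suc m" for i j
  proof -
    have "k * Suc m \<le> k * n" using Suc.prems(1) by (intro mult_le_mono2)
    then show ?thesis using that sorted by simp
  qed
  obtain Q'' where Q'': "tuple_partition k m Q''"
    "(\<Sum>B\<in>Q. (\<Sum>i\<in>B. x i)^2) \<le> (\<Sum>i\<in>{k*m+1..k*m+k}. x i)^2 + (\<Sum>D\<in>Q''. (\<Sum>i\<in>D. x i)^2)"
    using swap_step[where x=x, OF k Suc.prems(2) sorted'] by blast
  have IH: "(\<Sum>D\<in>Q''. (\<Sum>i\<in>D. x i)^2) \<le> (\<Sum>j\<in>{1..m}. (\<Sum>i\<in>{(j - 1) * k + 1 .. j * k}. x i)^2)"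
    using Suc.IH[OF _ Q''(1)] Suc.prems(1) by simp
  have T: "{k*m+1..k*m+k} = {(Suc m - 1) * k + 1 .. Suc m * k}" by (simp add: algebra_simps)
  show ?case using Q''(2) IH unfolding T by simp
qed

lemma S_min:
  fixes x :: "nat \<Rightarrow> real"
  assumes k: "k > 0"
    and sorted: "\<And>i j. 1 \<le> i \<Longrightarrow> i \<le> j \<Longrightarrow> j \<le> k * n \<Longrightarrow> x i \<le> x j"
  shows "minimal_partition S_disp k n x (consecutive_partition k n)"
  unfolding minimal_partition_def
proof (intro conjI allI impI)
  have C: "tuple_partition k n (consecutive_partition k n)" using consecutive_tp k by simp
  then show "tuple_partition k n (consecutive_partition k n)" .
  fix Q assume Q: "tuple_partition k n Q"
  have eq: "(\<Sum>B\<in>consecutive_partition k n. (\<Sum>i\<in>B. x i)^2)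
      = (\<Sum>j\<in>{1..n}. (\<Sum>i\<in>{(j - 1) * k + 1 .. j * k}. x i)^2)"
    unfolding consecutive_partition_def using blocks_inj[OF k, of n] by (simp add: sum.reindex)
  have "(\<Sum>B\<in>Q. (\<Sum>i\<in>B. x i)^2) \<le> (\<Sum>B\<in>consecutive_partition k n. (\<Sum>i\<in>B. x i)^2)"
    using S_ind[OF k sorted le_refl Q] eq by simp
  then show "partition_cost S_disp x (consecutive_partition k n) \<le> partition_cost S_disp x Q"
    unfolding S_cost[OF C] S_cost[OF Q] by simp
qed


theorem mainTheorem5:
  fixes k n :: nat and x :: "nat \<Rightarrow> real"
  assumes "k \<ge> 1" and "n \<ge> 1"
    and sorted: "\<And>i j. 1 \<le> i \<Longrightarrow> i \<le> j \<Longrightarrow> j \<le> k * n \<Longrightarrow> x i \<le> x j"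
  shows "(2 \<le> k \<and> k \<le> 16 \<longrightarrow> minimal_partition A_disp k n x (consecutive_partition k n))
       \<and> (2 \<le> k \<and> k \<le> 8 \<longrightarrow> minimal_partition S_disp k n x (consecutive_partition k n))"
proof -
  have k: "k > 0" using assms(1) by simp
  show ?thesis using A_min[OF k sorted] S_min[OF k sorted] by simp
qed

end
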